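(* Let $\mathcal{G}=(V,E)$ be an $m$-uniform connected hypergraph with $m>2$ and $n$ vertices. Then $$\lambda_n(L_{\mathcal{G}})\le\max_{i\in V}\frac{2d_i(m-1)-1+\sqrt{4(m-1)^2d_i m_i D_{\max}^2-2d_i(m-1)+1}}{2(m-1)},$$ where $m_i=\big(\sum_{j\sim i}d_j\big)/\big(d_i(m-1)\big)$ and $D_{\max}=\max\{d_{xy}: x,y\in V\}$.
   Context: A hypergraph $\mathcal{G}=(V,E)$ has a finite vertex set $V$ and a set $E$ of subsets of $V$ (edges); it is $m$-uniform if every edge has exactly $m$ vertices. Distinct vertices $i,j$ are adjacent ($i\sim j$) if some edge contains both. The degree $d_i$ is the number of edges containing $i$, and the codegree $d_{xy}$ of distinct vertices $x,y$ is the number of edges containing both. The Laplacian $L_{\mathcal{G}}$ has $(L_{\mathcal{G}})_{ii}=d_i$ and $(L_{\mathcal{G}})_{ij}=-d_{ij}/(m-1)$ for $i\ne j$; $\lambda_n(L_{\mathcal{G}})$ is its largest eigenvalue. *)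

theory Defs
  imports Main "HOL-Analysis.Analysis"
begin

definition hypergraph :: "'a set \<Rightarrow> 'a set set \<Rightarrow> bool" where
  "hypergraph V E \<longleftrightarrow> finite V \<and> (\<forall>e\<in>E. e \<subseteq> V)"

definition uniform :: "nat \<Rightarrow> 'a set set \<Rightarrow> bool" where
  "uniform m E \<longleftrightarrow> (\<forall>e\<in>E. card e = m)"

definition adj :: "'a set set \<Rightarrow> 'a \<Rightarrow> 'a \<Rightarrow> bool" where
  "adj E i j \<longleftrightarrow> i \<noteq> j \<and> (\<exists>e\<in>E. i \<in> e \<and> j \<in> e)"

definition hconnected :: "'a set \<Rightarrow> 'a set set \<Rightarrow> bool" where
  "hconnected V E \<longleftrightarrow>
     (\<forall>i\<in>V. \<forall>j\<in>V. (i, j) \<in> {(x, y). x \<in> V \<and> y \<in> V \<and> adj E x y}\<^sup>*)"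

definition deg :: "'a set set \<Rightarrow> 'a \<Rightarrow> nat" where
  "deg E i = card {e\<in>E. i \<in> e}"

definition codeg :: "'a set set \<Rightarrow> 'a \<Rightarrow> 'a \<Rightarrow> nat" where
  "codeg E x y = card {e\<in>E. x \<in> e \<and> y \<in> e}"

definition laplacian :: "nat \<Rightarrow> 'a set set \<Rightarrow> 'a \<Rightarrow> 'a \<Rightarrow> real" where
  "laplacian m E i j =
     (if i = j then real (deg E i) else - real (codeg E i j) / (real m - 1))"

definition eigenvalues_on :: "'a set \<Rightarrow> ('a \<Rightarrow> 'a \<Rightarrow> real) \<Rightarrow> real set" where
  "eigenvalues_on V A = {\<mu>. \<exists>x :: 'a \<Rightarrow> real. (\<exists>i\<in>V. x i \<noteq> 0) \<and>
       (\<forall>i\<in>V. (\<Sum>j\<in>V. A i j * x j) = \<mu> * x i)}"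

definition largest_eigenvalue :: "'a set \<Rightarrow> ('a \<Rightarrow> 'a \<Rightarrow> real) \<Rightarrow> real" where
  "largest_eigenvalue V A = Max (eigenvalues_on V A)"

definition Dmax :: "'a set \<Rightarrow> 'a set set \<Rightarrow> nat" where
  "Dmax V E = Max {codeg E x y | x y. x \<in> V \<and> y \<in> V \<and> x \<noteq> y}"

definition mi :: "nat \<Rightarrow> 'a set \<Rightarrow> 'a set set \<Rightarrow> 'a \<Rightarrow> real" where
  "mi m V E i = (\<Sum>j\<in>{j\<in>V. adj E i j}. real (deg E j)) / (real (deg E i) * (real m - 1))"

end

theory Submission imports Defs "Jordan_Normal_Form.Char_Poly" begin

lemma eig_finite:
  assumes fin: "finite V"
  shows "finite (eigenvalues_on V A)"
proof -
  define n where "n = card V"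
  obtain f where f: "bij_betw f {0..<n} V" using ex_bij_betw_nat_finite[OF fin] n_def by blast
  define B where "B = mat n n (\<lambda>(k,l). A (f k) (f l))"
  have Bc: "B \<in> carrier_mat n n" unfolding B_def by simp
  have nz: "char_poly B \<noteq> 0" using degree_monic_char_poly[OF Bc] by auto
  have "eigenvalues_on V A \<subseteq> {\<mu>. poly (char_poly B) \<mu> = 0}"
  proof
    fix \<mu> assume "\<mu> \<in> eigenvalues_on V A"
    then obtain x where x1: "\<exists>i\<in>V. x i \<noteq> 0" and x2: "\<forall>i\<in>V. (\<Sum>j\<in>V. A i j * x j) = \<mu> * x i"
      unfolding eigenvalues_on_def by blast
    define v where "v = vec n (\<lambda>k. x (f k))"
    have vc: "v \<in> carrier_vec n" unfolding v_def by simp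
    obtain i where i: "i \<in> V" "x i \<noteq> 0" using x1 by blast
    obtain k where k: "k < n" "f k = i" using f i(1) unfolding bij_betw_def by auto
    have vnz: "v \<noteq> 0\<^sub>v n"
    proof
      assume "v = 0\<^sub>v n"
      then have "v $ k = 0" using k by simp
      then show False using k i unfolding v_def by simp
    qed
    have "B *\<^sub>v v = \<mu> \<cdot>\<^sub>v v"
    proof (rule eq_vecI)
      fix k assume k: "k < dim_vec (\<mu> \<cdot>\<^sub>v v)"
      then have kn: "k < n" unfolding v_def by simp
      have fk: "f k \<in> V" using f kn unfolding bij_betw_def by auto
      have "(B *\<^sub>v v) $ k = (\<Sum>l\<in>{0..<n}. A (f k) (f l) * x (f l))"
        using kn unfolding B_def v_def by (simp add: scalar_prod_def)
      also have "\<dots> = (\<Sum>j\<in>V. A (f k) j * x j)"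
        using sum.reindex_bij_betw[OF f, of "\<lambda>j. A (f k) j * x j"] by simp
      also have "\<dots> = \<mu> * x (f k)" using x2 fk by blast
      finally show "(B *\<^sub>v v) $ k = (\<mu> \<cdot>\<^sub>v v) $ k" using kn unfolding v_def by simp
    qed (simp add: B_def v_def)
    then have "eigenvalue B \<mu>" unfolding eigenvalue_def eigenvector_def
      using vc vnz Bc by auto
    then show "\<mu> \<in> {\<mu>. poly (char_poly B) \<mu> = 0}" using eigenvalue_root_char_poly[OF Bc] by simp
  qed
  then show ?thesis using poly_roots_finite[OF nz] finite_subset by blast
qed

lemma codeg_sum:
  assumes fin: "finite V" and finE: "finite E" and sub: "\<forall>e\<in>E. e \<subseteq> V"
  shows "(\<Sum>j\<in>V-{i}. real (codeg E i j) * f j) = (\<Sum>e\<in>{e\<in>E. i\<in>e}. \<Sum>j\<in>e-{i}. f j)"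
proof -
  have c: "real (codeg E i j) = (\<Sum>e\<in>E. if i\<in>e \<and> j\<in>e then 1 else 0)" for j
    unfolding codeg_def using finE by (simp add: sum.If_cases Int_def conj_commute)
  have "(\<Sum>j\<in>V-{i}. real (codeg E i j) * f j) = (\<Sum>j\<in>V-{i}. \<Sum>e\<in>E. if i\<in>e \<and> j\<in>e then f j else 0)"
    unfolding c sum_distrib_right by (intro sum.cong refl) simp
  also have "\<dots> = (\<Sum>e\<in>E. \<Sum>j\<in>V-{i}. if i\<in>e \<and> j\<in>e then f j else 0)"
    by (rule sum.swap)
  also have "\<dots> = (\<Sum>e\<in>E. if i \<in> e then (\<Sum>j\<in>e-{i}. f j) else 0)"
  proof (rule sum.cong[OF refl])
    fix e assume e: "e \<in> E"
    have fe: "finite e" using e sub fin finite_subset by blast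
    show "(\<Sum>j\<in>V-{i}. if i\<in>e \<and> j\<in>e then f j else 0) = (if i \<in> e then (\<Sum>j\<in>e-{i}. f j) else 0)"
    proof (cases "i \<in> e")
      case True
      have "(\<Sum>j\<in>V-{i}. if i\<in>e \<and> j\<in>e then f j else 0) = (\<Sum>j\<in>V-{i}. if j\<in>e then f j else 0)"
        using True by simp
      also have "\<dots> = (\<Sum>j\<in>{j\<in>V-{i}. j\<in>e}. f j)"
        by (rule sum.inter_filter[symmetric]) (use fin in simp)
      also have "{j\<in>V-{i}. j\<in>e} = e - {i}" using e sub by blast
      finally show ?thesis using True by simp
    qed simp
  qed
  also have "\<dots> = (\<Sum>e\<in>{e\<in>E. i\<in>e}. \<Sum>j\<in>e-{i}. f j)"
    using finE by (simp add: sum.inter_filter)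
  finally show ?thesis .
qed

lemma lap_row:
  assumes fin: "finite V" and finE: "finite E" and sub: "\<forall>e\<in>E. e \<subseteq> V" and i: "i \<in> V"
  shows "(\<Sum>j\<in>V. laplacian m E i j * x j) =
    real (deg E i) * x i - (\<Sum>e\<in>{e\<in>E. i\<in>e}. \<Sum>j\<in>e-{i}. x j) / (real m - 1)"
proof -
  have "(\<Sum>j\<in>V. laplacian m E i j * x j) = laplacian m E i i * x i + (\<Sum>j\<in>V-{i}. laplacian m E i j * x j)"
    using fin i by (simp add: sum.remove)
  also have "(\<Sum>j\<in>V-{i}. laplacian m E i j * x j) = (\<Sum>j\<in>V-{i}. - (real (codeg E i j) * x j / (real m - 1)))"
    by (rule sum.cong) (auto simp: laplacian_def)
  also have "\<dots> = - (\<Sum>j\<in>V-{i}. real (codeg E i j) * x j) / (real m - 1)"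
    by (simp add: sum_negf sum_divide_distrib)
  also have "(\<Sum>j\<in>V-{i}. real (codeg E i j) * x j) = (\<Sum>e\<in>{e\<in>E. i\<in>e}. \<Sum>j\<in>e-{i}. x j)"
    by (rule codeg_sum[OF fin finE sub])
  finally show ?thesis by (simp add: laplacian_def)
qed

lemma swap_edges:
  assumes fin: "finite V" and finE: "finite E" and sub: "\<forall>e\<in>E. e \<subseteq> V"
  shows "(\<Sum>i\<in>V. \<Sum>e\<in>{e\<in>E. i\<in>e}. g i e) = (\<Sum>e\<in>E. \<Sum>i\<in>e. g i e)"
proof -
  have "(\<Sum>i\<in>V. \<Sum>e\<in>{e\<in>E. i\<in>e}. g i e) = (\<Sum>i\<in>V. \<Sum>e\<in>E. if i \<in> e then g i e else 0)"
    using finE by (simp add: sum.inter_filter)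
  also have "\<dots> = (\<Sum>e\<in>E. \<Sum>i\<in>V. if i \<in> e then g i e else 0)" by (rule sum.swap)
  also have "\<dots> = (\<Sum>e\<in>E. \<Sum>i\<in>e. g i e)"
  proof (rule sum.cong[OF refl])
    fix e assume e: "e \<in> E"
    have "(\<Sum>i\<in>V. if i \<in> e then g i e else 0) = (\<Sum>i\<in>{i\<in>V. i\<in>e}. g i e)"
      using fin by (simp add: sum.inter_filter)
    also have "{i\<in>V. i\<in>e} = e" using e sub by blast
    finally show "(\<Sum>i\<in>V. if i \<in> e then g i e else 0) = (\<Sum>i\<in>e. g i e)" .
  qed
  finally show ?thesis .
qed

lemma quad_bound:
  fixes a K d l :: real
  assumes a: "a > 0" and h: "a * (l - d)^2 + l - d/2 \<le> K"
  shows "l \<le> (2*d*a - 1 + sqrt (4*a*K - 2*d*a + 1)) / (2*a)"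
proof -
  have "(2*a*(l-d) + 1)^2 \<le> 4*a*K - 2*d*a + 1"
  proof -
    have "4*a*K - 2*d*a + 1 - (2*a*(l-d) + 1)^2 = 4*a*(K - (a * (l - d)^2 + l - d/2))"
      by (simp add: algebra_simps power2_eq_square)
    moreover have "4*a*(K - (a * (l - d)^2 + l - d/2)) \<ge> 0" using a h by simp
    ultimately show ?thesis by linarith
  qed
  then have "sqrt ((2*a*(l-d) + 1)^2) \<le> sqrt (4*a*K - 2*d*a + 1)" by (rule real_sqrt_le_mono)
  then have "2*a*(l-d) + 1 \<le> sqrt (4*a*K - 2*d*a + 1)" by simp
  then have "2*a*l \<le> 2*d*a - 1 + sqrt (4*a*K - 2*d*a + 1)" by (simp add: algebra_simps)
  then show ?thesis using a by (simp add: field_simps)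
qed


lemma sum_swap_diff:
  assumes fe: "finite e"
  shows "(\<Sum>i\<in>e. \<Sum>k\<in>e-{i}. f i k) = (\<Sum>k\<in>e. \<Sum>i\<in>e-{k}. (f i k :: real))"
proof -
  have "(\<Sum>i\<in>e. \<Sum>k\<in>e-{i}. f i k) = (\<Sum>i\<in>e. \<Sum>k\<in>{k. k\<in>e \<and> i \<noteq> k}. f i k)"
    by (intro sum.cong refl arg_cong[where f="sum _"]) auto
  also have "\<dots> = (\<Sum>k\<in>e. \<Sum>i\<in>{i. i\<in>e \<and> i \<noteq> k}. f i k)"
    by (rule sum.swap_restrict[OF fe fe])
  also have "\<dots> = (\<Sum>k\<in>e. \<Sum>i\<in>e-{k}. f i k)"
    by (intro sum.cong refl arg_cong[where f="sum _"]) auto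
  finally show ?thesis .
qed

lemma edge_ineq:
  fixes e :: "'a set" and x d :: "'a \<Rightarrow> real" and a :: real
  assumes fe: "finite e" and ce: "real (card e) = a + 1" and a2: "a \<ge> 2" and d1: "\<forall>i\<in>e. d i \<ge> 1"
  shows "(\<Sum>i\<in>e. d i / a * (\<Sum>j\<in>e-{i}. x j)^2 - x i * (\<Sum>j\<in>e-{i}. x j) / a + (x i)^2/2)
         \<le> (\<Sum>i\<in>e. (x i)^2 * (\<Sum>j\<in>e-{i}. d j))"
proof -
  define X where "X = (\<Sum>k\<in>e. x k)"
  define P where "P = (\<Sum>k\<in>e. (x k)^2)"
  have z: "(\<Sum>j\<in>e-{i}. x j) = X - x i" if "i \<in> e" for i
    using that fe by (simp add: X_def sum_diff1)
  have ce1: "real (card (e - {i})) = a" if "i \<in> e" for i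
  proof -
    have "card e > 0" using that fe by (auto simp: card_gt_0_iff)
    then show ?thesis using ce that fe by (simp add: card_Diff_singleton of_nat_diff)
  qed
  have s1: "(\<Sum>i\<in>e. (X - x i)^2) = (a+1) * X^2 - 2*X^2 + P"
  proof -
    have "(\<Sum>i\<in>e. (X - x i)^2) = (\<Sum>i\<in>e. X^2 - 2*X*x i + (x i)^2)"
      by (intro sum.cong refl) (simp add: power2_diff algebra_simps)
    also have "\<dots> = real (card e) * X^2 - 2*X*X + P"
      by (simp add: sum.distrib sum_subtractf sum_distrib_left[symmetric] X_def P_def)
    finally show ?thesis using ce by (simp add: power2_eq_square)
  qed
  have s2: "(\<Sum>i\<in>e. x i * (X - x i)) = X^2 - P"
    by (simp add: algebra_simps sum_subtractf sum_distrib_right[symmetric] X_def P_def power2_eq_square)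
  have cs1: "X^2 \<le> P * (a+1)"
    using sum_squared_le_sum_of_squares[of x e] ce by (simp add: X_def P_def)
  have cs2: "(X - x i)^2 \<le> a * (\<Sum>k\<in>e-{i}. (x k)^2)" if "i \<in> e" for i
    using sum_squared_le_sum_of_squares[of x "e-{i}"] z[OF that] ce1[OF that] by (simp add: mult.commute)
  have swap: "(\<Sum>i\<in>e. (d i - 1) * (\<Sum>k\<in>e-{i}. (x k)^2)) = (\<Sum>k\<in>e. (x k)^2 * (\<Sum>i\<in>e-{k}. (d i - 1)))"
    using sum_swap_diff[OF fe, of "\<lambda>i k. (d i - 1) * (x k)^2"]
    by (simp add: sum_distrib_left sum_distrib_right mult.commute)
  have sd: "(\<Sum>i\<in>e-{k}. (d i - 1)) = (\<Sum>i\<in>e-{k}. d i) - a" if "k \<in> e" for k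
    using ce1[OF that] by (simp add: sum_subtractf)
  have t1: "(\<Sum>i\<in>e. (d i - 1) / a * (X - x i)^2) \<le> (\<Sum>i\<in>e. (d i - 1) * (\<Sum>k\<in>e-{i}. (x k)^2))"
  proof (rule sum_mono)
    fix i assume i: "i \<in> e"
    have "(d i - 1) / a * (X - x i)^2 \<le> (d i - 1) / a * (a * (\<Sum>k\<in>e-{i}. (x k)^2))"
      using cs2[OF i] d1 i a2 by (intro mult_left_mono) auto
    also have "\<dots> = (d i - 1) * (\<Sum>k\<in>e-{i}. (x k)^2)" using a2 by simp
    finally show "(d i - 1) / a * (X - x i)^2 \<le> (d i - 1) * (\<Sum>k\<in>e-{i}. (x k)^2)" .
  qed
  have t2: "(\<Sum>i\<in>e. (d i - 1) * (\<Sum>k\<in>e-{i}. (x k)^2)) = (\<Sum>k\<in>e. (x k)^2 * (\<Sum>j\<in>e-{k}. d j)) - a * P"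
    unfolding swap using sd by (simp add: algebra_simps sum_subtractf P_def sum_distrib_left)
  have t3: "(a-2)*X^2 + 2*P \<le> a*(a-1)*P"
  proof -
    have "(a-2)*X^2 \<le> (a-2)*(P*(a+1))" using cs1 a2 by (intro mult_left_mono) auto
    then show ?thesis by (simp add: algebra_simps)
  qed
  have t4: "((a-2)*X^2 + 2*P) / a \<le> (a-1)*P"
    using t3 a2 by (simp add: divide_le_eq mult.commute mult.left_commute)
  have P0: "P \<ge> 0" unfolding P_def by (simp add: sum_nonneg)
  have "(\<Sum>i\<in>e. d i / a * (\<Sum>j\<in>e-{i}. x j)^2 - x i * (\<Sum>j\<in>e-{i}. x j) / a + (x i)^2/2)
      = (\<Sum>i\<in>e. (X - x i)^2 / a + (d i - 1) / a * (X - x i)^2 - x i * (X - x i) / a + (x i)^2/2)"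
  proof (rule sum.cong[OF refl])
    fix i assume i: "i \<in> e"
    show "d i / a * (\<Sum>j\<in>e-{i}. x j)^2 - x i * (\<Sum>j\<in>e-{i}. x j) / a + (x i)^2/2
      = (X - x i)^2 / a + (d i - 1) / a * (X - x i)^2 - x i * (X - x i) / a + (x i)^2/2"
    proof -
      have h: "(d i - 1) / a * (X - x i)^2 = d i / a * (X - x i)^2 - (X - x i)^2 / a"
        by (simp add: diff_divide_distrib left_diff_distrib)
      show ?thesis unfolding z[OF i] using h by linarith
    qed
  qed
  also have "\<dots> = (\<Sum>i\<in>e. (X - x i)^2) / a + (\<Sum>i\<in>e. (d i - 1) / a * (X - x i)^2) - (\<Sum>i\<in>e. x i * (X - x i)) / a + P/2"
    by (simp add: sum.distrib sum_subtractf sum_divide_distrib P_def)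
  also have "\<dots> = ((a-2)*X^2 + 2*P) / a + (\<Sum>i\<in>e. (d i - 1) / a * (X - x i)^2)  + P/2"
    unfolding s1 s2 using a2 by (simp add: field_simps)
  also have "\<dots> \<le> (a-1)*P + ((\<Sum>k\<in>e. (x k)^2 * (\<Sum>j\<in>e-{k}. d j)) - a * P) + P/2"
    using t1 t2 t4 by linarith
  also have "\<dots> \<le> (\<Sum>k\<in>e. (x k)^2 * (\<Sum>j\<in>e-{k}. d j))" using P0 by (simp add: algebra_simps)
  finally show ?thesis .
qed


lemma deg_pos:
  assumes finE: "finite E" and e: "e \<in> E" and j: "j \<in> e"
  shows "real (deg E j) \<ge> 1"
proof -
  have "{e\<in>E. j\<in>e} \<noteq> {}" using e j by blast
  then have "card {e\<in>E. j\<in>e} > 0" using finE by (simp add: card_gt_0_iff)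
  then show ?thesis by (simp add: deg_def)
qed

lemma codeg_le_Dmax:
  assumes fin: "finite V" and i: "i \<in> V" and j: "j \<in> V" and ij: "i \<noteq> j"
  shows "codeg E i j \<le> Dmax V E"
proof -
  have "{codeg E x y | x y. x \<in> V \<and> y \<in> V \<and> x \<noteq> y} \<subseteq> (\<lambda>(x,y). codeg E x y) ` (V \<times> V)" by auto
  then have "finite {codeg E x y | x y. x \<in> V \<and> y \<in> V \<and> x \<noteq> y}"
    using fin by (meson finite_SigmaI finite_imageI finite_subset)
  moreover have "codeg E i j \<in> {codeg E x y | x y. x \<in> V \<and> y \<in> V \<and> x \<noteq> y}" using i j ij by blast
  ultimately show ?thesis unfolding Dmax_def by (rule Max_ge)
qed

lemma codeg_adj:
  assumes "codeg E i j \<noteq> 0" "i \<noteq> j"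
  shows "adj E i j"
proof -
  have "{e\<in>E. i \<in> e \<and> j \<in> e} \<noteq> {}" using assms(1) unfolding codeg_def by (metis card.empty)
  then show ?thesis using assms(2) unfolding adj_def by blast
qed

lemma main_ineq:
  assumes fin: "finite V" and sub: "\<forall>e\<in>E. e \<subseteq> V" and uni: "uniform m E" and m: "m > 2"
    and ev: "l \<in> eigenvalues_on V (laplacian m E)"
  shows "\<exists>i\<in>V. (real m - 1) * (l - real (deg E i))^2 + l - real (deg E i) / 2
     \<le> (real (Dmax V E))^2 * (\<Sum>j\<in>{j\<in>V. adj E i j}. real (deg E j))"
proof -
  define a where "a = real m - 1"
  have a2: "a \<ge> 2" using m unfolding a_def by simp
  have finE: "finite E" using sub fin by (meson Pow_iff finite_Pow_iff finite_subset subsetI)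
  obtain x where x1: "\<exists>i\<in>V. x i \<noteq> 0" and x2: "\<forall>i\<in>V. (\<Sum>j\<in>V. laplacian m E i j * x j) = l * x i"
    using ev unfolding eigenvalues_on_def by blast
  define dd where "dd j = real (deg E j)" for j
  define DD where "DD = (real (Dmax V E))^2"
  define S where "S i = (\<Sum>j\<in>{j\<in>V. adj E i j}. dd j)" for i
  define Ei where "Ei i = {e\<in>E. i\<in>e}" for i
  define z where "z e i = (\<Sum>j\<in>e-{i}. x j)" for e i
  define y where "y i = (\<Sum>e\<in>Ei i. z e i)" for i
  define c where "c i = a * (l - dd i)^2 + l - dd i / 2 - DD * S i" for i
  define g where "g i e = dd i / a * (z e i)^2 - x i * z e i / a + (x i)^2/2" for i e
  have finEi: "finite (Ei i)" for i using finE unfolding Ei_def by simp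
  have cEi: "real (card (Ei i)) = dd i" for i unfolding Ei_def dd_def deg_def by simp
  have eq: "dd i * x i - y i / a = l * x i" if "i \<in> V" for i
    using x2 that lap_row[OF fin finE sub that, of m x] unfolding dd_def y_def Ei_def z_def a_def by simp
  have hy: "y i = a * (dd i - l) * x i" if "i \<in> V" for i
    using eq[OF that] a2 by (simp add: field_simps)
  have A: "c i * (x i)^2 = (y i)^2 / a - x i * y i / a + dd i * (x i)^2 / 2 - DD * S i * (x i)^2"
    if "i \<in> V" for i
    unfolding hy[OF that] c_def using a2 by (simp add: field_simps power2_eq_square)
  have B: "c i * (x i)^2 \<le> (\<Sum>e\<in>Ei i. g i e) - DD * S i * (x i)^2" if "i \<in> V" for i
  proof -
    have cs: "(y i)^2 \<le> dd i * (\<Sum>e\<in>Ei i. (z e i)^2)"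
      using sum_squared_le_sum_of_squares[of "\<lambda>e. z e i" "Ei i"] cEi[of i]
      unfolding y_def by (simp add: mult.commute)
    have "(\<Sum>e\<in>Ei i. g i e) = dd i / a * (\<Sum>e\<in>Ei i. (z e i)^2) - x i * y i / a + dd i * (x i)^2 / 2"
      unfolding g_def y_def using cEi[of i]
      by (simp add: sum.distrib sum_subtractf sum_distrib_left sum_divide_distrib)
    moreover have "(y i)^2 / a \<le> dd i / a * (\<Sum>e\<in>Ei i. (z e i)^2)"
      using cs a2 by (simp add: divide_right_mono)
    ultimately show ?thesis using A[OF that] by linarith
  qed
  have F: "(\<Sum>j\<in>V-{i}. real (codeg E i j) * dd j) \<le> DD * S i" if "i \<in> V" for i
  proof -
    have "(\<Sum>j\<in>V-{i}. real (codeg E i j) * dd j) \<le> (\<Sum>j\<in>V-{i}. if adj E i j then DD * dd j else 0)"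
    proof (rule sum_mono)
      fix j assume j: "j \<in> V-{i}"
      have dd0: "dd j \<ge> 0" unfolding dd_def by simp
      show "real (codeg E i j) * dd j \<le> (if adj E i j then DD * dd j else 0)"
      proof (cases "adj E i j")
        case True
        have "codeg E i j \<le> Dmax V E" using codeg_le_Dmax[OF fin that, of j E] j by auto
        moreover have "Dmax V E \<le> (Dmax V E)^2" by (simp add: power2_eq_square)
        ultimately have "real (codeg E i j) \<le> DD" unfolding DD_def
          by (metis le_trans of_nat_le_iff of_nat_power)
        then show ?thesis using True dd0 by (simp add: mult_right_mono)
      next
        case False
        then have "codeg E i j = 0" using codeg_adj[of E i j] j by auto
        then show ?thesis using False by simp
      qed
    qed
    also have "\<dots> = (\<Sum>j\<in>{j\<in>V-{i}. adj E i j}. DD * dd j)"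
      by (rule sum.inter_filter[symmetric]) (use fin in simp)
    also have "{j\<in>V-{i}. adj E i j} = {j\<in>V. adj E i j}" unfolding adj_def by auto
    finally show ?thesis unfolding S_def by (simp add: sum_distrib_left)
  qed
  have "(\<Sum>i\<in>V. c i * (x i)^2) \<le> (\<Sum>i\<in>V. (\<Sum>e\<in>Ei i. g i e) - DD * S i * (x i)^2)"
    using B by (rule sum_mono)
  also have "\<dots> = (\<Sum>e\<in>E. \<Sum>i\<in>e. g i e) - (\<Sum>i\<in>V. DD * S i * (x i)^2)"
    using swap_edges[OF fin finE sub, of g] unfolding Ei_def by (simp add: sum_subtractf)
  also have "(\<Sum>e\<in>E. \<Sum>i\<in>e. g i e) \<le> (\<Sum>e\<in>E. \<Sum>i\<in>e. (x i)^2 * (\<Sum>j\<in>e-{i}. dd j))"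
  proof (rule sum_mono)
    fix e assume e: "e \<in> E"
    have fe: "finite e" using e sub fin finite_subset by blast
    have ce: "real (card e) = a + 1" using uni e unfolding uniform_def a_def by simp
    have d1: "\<forall>j\<in>e. dd j \<ge> 1" using deg_pos[OF finE e] unfolding dd_def by blast
    show "(\<Sum>i\<in>e. g i e) \<le> (\<Sum>i\<in>e. (x i)^2 * (\<Sum>j\<in>e-{i}. dd j))"
      using edge_ineq[OF fe ce a2 d1, of x] unfolding g_def z_def .
  qed
  also have "(\<Sum>e\<in>E. \<Sum>i\<in>e. (x i)^2 * (\<Sum>j\<in>e-{i}. dd j)) = (\<Sum>i\<in>V. \<Sum>e\<in>Ei i. (x i)^2 * (\<Sum>j\<in>e-{i}. dd j))"
    using swap_edges[OF fin finE sub, of "\<lambda>i e. (x i)^2 * (\<Sum>j\<in>e-{i}. dd j)"] unfolding Ei_def by simp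
  also have "\<dots> = (\<Sum>i\<in>V. (x i)^2 * (\<Sum>j\<in>V-{i}. real (codeg E i j) * dd j))"
    using codeg_sum[OF fin finE sub] unfolding Ei_def by (simp add: sum_distrib_left)
  also have "\<dots> \<le> (\<Sum>i\<in>V. (x i)^2 * (DD * S i))"
    using F by (intro sum_mono mult_left_mono) auto
  finally have tot: "(\<Sum>i\<in>V. c i * (x i)^2) \<le> 0" by (simp add: algebra_simps)
  show ?thesis
  proof (rule ccontr)
    assume "\<not> ?thesis"
    then have cpos: "\<forall>i\<in>V. c i > 0" unfolding c_def dd_def DD_def S_def a_def by force
    obtain i0 where i0: "i0 \<in> V" "x i0 \<noteq> 0" using x1 by blast
    have "(\<Sum>i\<in>V. c i * (x i)^2) > 0"
      using i0 cpos fin by (intro sum_pos2[of V i0]) auto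
    then show False using tot by simp
  qed
qed


lemma mi_eq:
  assumes finE: "finite E" and a: "real m - 1 > 0"
  shows "(real m - 1)^2 * real (deg E i) * mi m V E i = (real m - 1) * (\<Sum>j\<in>{j\<in>V. adj E i j}. real (deg E j))"
proof (cases "deg E i = 0")
  case True
  have "{j\<in>V. adj E i j} = {}"
  proof (rule ccontr)
    assume "{j\<in>V. adj E i j} \<noteq> {}"
    then obtain j e where "e \<in> E" "i \<in> e" unfolding adj_def by blast
    then have "real (deg E i) \<ge> 1" using deg_pos[OF finE] by blast
    then show False using True by simp
  qed
  then have "(\<Sum>j\<in>{j\<in>V. adj E i j}. real (deg E j)) = 0" by (simp only: sum.empty)
  then show ?thesis using True by simp
next
  case False
  then show ?thesis using a unfolding mi_def by (simp add: field_simps power2_eq_square)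
qed

theorem theorem12:
  fixes V :: "'a set" and E :: "'a set set" and m :: nat
  assumes "hypergraph V E" and "uniform m E" and "hconnected V E"
    and "V \<noteq> {}" and "m > 2"
  shows "largest_eigenvalue V (laplacian m E) \<le>
    Max ((\<lambda>i. (2 * real (deg E i) * (real m - 1) - 1
        + sqrt (4 * (real m - 1)^2 * real (deg E i) * mi m V E i * (real (Dmax V E))^2
                - 2 * real (deg E i) * (real m - 1) + 1))
        / (2 * (real m - 1))) ` V)"
proof -
  have fin: "finite V" and sub: "\<forall>e\<in>E. e \<subseteq> V" using assms(1) unfolding hypergraph_def by auto
  have finE: "finite E" using sub fin by (meson Pow_iff finite_Pow_iff finite_subset subsetI)
  define a where "a = real m - 1"
  have a2: "a \<ge> 2" using assms(5) unfolding a_def by simp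
  have zero: "0 \<in> eigenvalues_on V (laplacian m E)"
    unfolding eigenvalues_on_def
  proof (intro CollectI exI[of _ "\<lambda>_. 1"] conjI ballI)
    show "\<exists>i\<in>V. (1::real) \<noteq> 0" using assms(4) by auto
  next
    fix i assume i: "i \<in> V"
    have "(\<Sum>e\<in>{e\<in>E. i\<in>e}. \<Sum>j\<in>e-{i}. (1::real)) = (\<Sum>e\<in>{e\<in>E. i\<in>e}. a)"
    proof (rule sum.cong[OF refl])
      fix e assume e: "e \<in> {e\<in>E. i\<in>e}"
      have fe: "finite e" using e sub fin finite_subset by blast
      have "card e = m" using e assms(2) unfolding uniform_def by auto
      moreover have "card e > 0" using e fe by (auto simp: card_gt_0_iff)
      ultimately show "(\<Sum>j\<in>e-{i}. (1::real)) = a" using e fe unfolding a_def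
        by (simp add: card_Diff_singleton of_nat_diff)
    qed
    also have "\<dots> = real (deg E i) * a" by (simp add: deg_def)
    finally show "(\<Sum>j\<in>V. laplacian m E i j * 1) = 0 * 1"
      using lap_row[OF fin finE sub i, of m "\<lambda>_. 1"] a2 unfolding a_def by simp
  qed
  define l where "l = largest_eigenvalue V (laplacian m E)"
  have lin: "l \<in> eigenvalues_on V (laplacian m E)"
    unfolding l_def largest_eigenvalue_def using eig_finite[OF fin] zero by (intro Max_in) auto
  obtain i where i: "i \<in> V" and hi: "a * (l - real (deg E i))^2 + l - real (deg E i) / 2
     \<le> (real (Dmax V E))^2 * (\<Sum>j\<in>{j\<in>V. adj E i j}. real (deg E j))"
    using main_ineq[OF fin sub assms(2) assms(5) lin] unfolding a_def by blast
  have "l \<le> (2 * real (deg E i) * a - 1 + sqrt (4 * a * ((real (Dmax V E))^2 * (\<Sum>j\<in>{j\<in>V. adj E i j}. real (deg E j)))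
      - 2 * real (deg E i) * a + 1)) / (2 * a)"
    using quad_bound[OF _ hi] a2 by simp
  also have "4 * a * ((real (Dmax V E))^2 * (\<Sum>j\<in>{j\<in>V. adj E i j}. real (deg E j)))
     = 4 * (real m - 1)^2 * real (deg E i) * mi m V E i * (real (Dmax V E))^2"
  proof -
    have me: "(real m - 1)^2 * real (deg E i) * mi m V E i = a * (\<Sum>j\<in>{j\<in>V. adj E i j}. real (deg E j))"
      using mi_eq[OF finE, of m i V] a2 unfolding a_def by simp
    have "4 * (real m - 1)^2 * real (deg E i) * mi m V E i * (real (Dmax V E))^2
       = 4 * (real (Dmax V E))^2 * ((real m - 1)^2 * real (deg E i) * mi m V E i)" by (simp only: ac_simps)
    also have "\<dots> = 4 * (real (Dmax V E))^2 * (a * (\<Sum>j\<in>{j\<in>V. adj E i j}. real (deg E j)))" by (simp only: me)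
    finally show ?thesis by (simp only: ac_simps)
  qed
  also have "(2 * real (deg E i) * a - 1 + sqrt (4 * (real m - 1)^2 * real (deg E i) * mi m V E i * (real (Dmax V E))^2
      - 2 * real (deg E i) * a + 1)) / (2 * a) \<le> Max ((\<lambda>i. (2 * real (deg E i) * (real m - 1) - 1
        + sqrt (4 * (real m - 1)^2 * real (deg E i) * mi m V E i * (real (Dmax V E))^2
                - 2 * real (deg E i) * (real m - 1) + 1))
        / (2 * (real m - 1))) ` V)"
    unfolding a_def by (intro Max_ge finite_imageI fin imageI i)
  finally show ?thesis unfolding l_def .
qed

end
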